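(* Let $p\ge2$, $n\ge1$, $\alpha>1$ real, and $m\in\{j/p^n:0\le j\le p^n\}$ be fixed, and let $\mathcal{B}_m$ be the set of Boolean functions $f:(\mathbb{Z}/p\mathbb{Z})^n\to\{0,1\}$ with $\mathbb{E} f=m$. There exists $\epsilon_0>0$ such that for every $\epsilon\in(0,\epsilon_0)$, every $f\in\mathcal{B}_m$ maximizing $\mathbb{E}(T_\epsilon f)^\alpha$ over $\mathcal{B}_m$ satisfies $I(f)=\min\{I(g):g\in\mathcal{B}_m\}$.
   Context: $(\mathbb{Z}/p\mathbb{Z})^n$ carries the uniform measure; $X$ is a uniform random element. Here the noise operator is $T_\epsilon f(x)=\mathbb{E} f(x+Z)$, where $Z$ has independent coordinates, each equal to $0$ with probability $1-\epsilon$ and to $1$ and to $-1$ (i.e. $p-1$) with probability $\epsilon/2$ each. For $j\in[n]$, let $\tilde Z_j$ take the values $1$ and $-1$ with probability $1/2$ each, independent of $X$; $\tilde\sigma_j(x)=(x_1,\dots,x_j+\tilde Z_j,\dots,x_n)$, $I_j(f)=\mathbb{P}(f(X)\ne f(\tilde\sigma_j(X)))$, and the total influence is $I(f)=\sum_{j=1}^nI_j(f)$. *)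

theory Defs
  imports Complex_Main "HOL-Library.FuncSet"
begin

text \<open>(Z/pZ)^n is represented by the extensional functions {..<n} -> {..<p}.\<close>
definition cube :: "nat \<Rightarrow> nat \<Rightarrow> (nat \<Rightarrow> nat) set" where
  "cube p n = PiE {..<n} (\<lambda>_. {..<p})"

definition signs :: "nat \<Rightarrow> (nat \<Rightarrow> int) set" where
  "signs n = PiE {..<n} (\<lambda>_. {-1, 0, 1})"

definition addvec :: "nat \<Rightarrow> nat \<Rightarrow> (nat \<Rightarrow> nat) \<Rightarrow> (nat \<Rightarrow> int) \<Rightarrow> (nat \<Rightarrow> nat)" where
  "addvec p n x z = (\<lambda>i\<in>{..<n}. nat ((int (x i) + z i) mod int p))"

definition shift :: "nat \<Rightarrow> (nat \<Rightarrow> nat) \<Rightarrow> nat \<Rightarrow> int \<Rightarrow> (nat \<Rightarrow> nat)" where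
  "shift p x j d = x(j := nat ((int (x j) + d) mod int p))"

definition expect :: "nat \<Rightarrow> nat \<Rightarrow> ((nat \<Rightarrow> nat) \<Rightarrow> real) \<Rightarrow> real" where
  "expect p n f = (\<Sum>x\<in>cube p n. f x) / real p ^ n"

definition noise_weight :: "real \<Rightarrow> int \<Rightarrow> real" where
  "noise_weight eps d = (if d = 0 then 1 - eps else eps / 2)"

definition noise_op :: "nat \<Rightarrow> nat \<Rightarrow> real \<Rightarrow> ((nat \<Rightarrow> nat) \<Rightarrow> real) \<Rightarrow> (nat \<Rightarrow> nat) \<Rightarrow> real" where
  "noise_op p n eps f x =
     (\<Sum>z\<in>signs n. (\<Prod>i<n. noise_weight eps (z i)) * f (addvec p n x z))"

text \<open>I_j(f) = P(f(X) \<noteq> f(X + Z_j e_j)), Z_j uniform on {1,-1}.\<close>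
definition influence :: "nat \<Rightarrow> nat \<Rightarrow> ((nat \<Rightarrow> nat) \<Rightarrow> real) \<Rightarrow> nat \<Rightarrow> real" where
  "influence p n f j =
     (\<Sum>d\<in>{-1, 1::int}. real (card {x\<in>cube p n. f x \<noteq> f (shift p x j d)}) / 2) / real p ^ n"

definition total_influence :: "nat \<Rightarrow> nat \<Rightarrow> ((nat \<Rightarrow> nat) \<Rightarrow> real) \<Rightarrow> real" where
  "total_influence p n f = (\<Sum>j<n. influence p n f j)"

text \<open>Boolean functions on the cube with mean m (zero off the cube, for definiteness).\<close>
definition boolean_mean :: "nat \<Rightarrow> nat \<Rightarrow> real \<Rightarrow> ((nat \<Rightarrow> nat) \<Rightarrow> real) set" where
  "boolean_mean p n m = {f. (\<forall>x\<in>cube p n. f x \<in> {0, 1}) \<and> (\<forall>x. x \<notin> cube p n \<longrightarrow> f x = 0)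
                          \<and> expect p n f = m}"

end

theory Submission
  imports Defs
begin


lemma finite_cube: "finite (cube p n)"
  unfolding cube_def by (simp add: finite_PiE)

lemma finite_signs: "finite (signs n)"
  unfolding signs_def by (simp add: finite_PiE)

lemma shift_in:
  assumes "p > 0" "x \<in> cube p n" "j < n"
  shows "shift p x j d \<in> cube p n"
proof -
  have "nat ((int (x j) + d) mod int p) < p"
    using assms(1) by (simp add: nat_less_iff)
  then show ?thesis using assms unfolding cube_def shift_def
    by (auto simp: PiE_iff extensional_def)
qed

lemma shift_inv:
  assumes "p > 0" "x \<in> cube p n" "j < n"
  shows "shift p (shift p x j d) j (-d) = x"
proof -
  have xj: "x j < p" using assms unfolding cube_def by auto
  have "nat ((int (nat ((int (x j) + d) mod int p)) + - d) mod int p) = x j"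
  proof -
    have "int (nat ((int (x j) + d) mod int p)) = (int (x j) + d) mod int p"
      using assms(1) by simp
    then have "(int (nat ((int (x j) + d) mod int p)) + - d) mod int p = ((int (x j) + d) mod int p + - d) mod int p"
      by simp
    also have "\<dots> = (int (x j) + d + - d) mod int p" by (rule mod_add_left_eq)
    also have "\<dots> = int (x j) mod int p" by simp
    also have "\<dots> = int (x j)" using xj by simp
    finally show ?thesis by simp
  qed
  then show ?thesis unfolding shift_def by simp
qed

lemma shift_zero:
  assumes "x \<in> cube p n" "j < n"
  shows "shift p x j 0 = x"
proof -
  have xj: "x j < p" using assms unfolding cube_def by auto
  then show ?thesis unfolding shift_def by auto
qed

definition evec :: "nat \<Rightarrow> nat \<Rightarrow> int \<Rightarrow> (nat \<Rightarrow> int)" where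
  "evec n i d = (\<lambda>j\<in>{..<n}. if j = i then d else 0)"

lemma addvec_evec:
  assumes "x \<in> cube p n" "i < n"
  shows "addvec p n x (evec n i d) = shift p x i d"
proof
  fix j
  show "addvec p n x (evec n i d) j = shift p x i d j"
  proof (cases "j < n")
    case True
    then have "x j < p" using assms unfolding cube_def by auto
    then show ?thesis using True unfolding addvec_def evec_def shift_def by simp
  next
    case False
    then have 1: "x j = undefined" using assms unfolding cube_def by (auto simp: PiE_iff extensional_def)
    have 2: "addvec p n x (evec n i d) j = undefined" using False unfolding addvec_def by simp
    have 3: "shift p x i d j = x j" using False assms(2) unfolding shift_def by simp
    show ?thesis using 1 2 3 by simp
  qed
qed

lemma prod_nw0:
  assumes "finite A"
  shows "(\<Prod>j\<in>A. noise_weight 0 (z j)) = (if \<forall>j\<in>A. z j = 0 then 1 else 0)"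
proof (cases "\<forall>j\<in>A. z j = 0")
  case True
  then show ?thesis by (simp add: noise_weight_def)
next
  case False
  then obtain j where "j \<in> A" "z j \<noteq> 0" by auto
  then have "(\<Prod>j\<in>A. noise_weight 0 (z j)) = 0"
    using assms by (auto simp: prod_zero_iff noise_weight_def intro!: bexI[of _ j])
  then show ?thesis using False by simp
qed

lemma signs_axis:
  assumes "i < n"
  shows "{z \<in> signs n. \<forall>j\<in>{..<n}-{i}. z j = 0} = evec n i ` {-1,0,1}"
proof (intro set_eqI iffI)
  fix z assume z: "z \<in> {z \<in> signs n. \<forall>j\<in>{..<n}-{i}. z j = 0}"
  then have "z = evec n i (z i)"
    unfolding evec_def signs_def by (auto simp: PiE_iff extensional_def)
  moreover have "z i \<in> {-1,0,1}" using z assms unfolding signs_def by auto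
  ultimately show "z \<in> evec n i ` {-1,0,1}" by blast
next
  fix z assume "z \<in> evec n i ` {-1,0,1}"
  then obtain d where d: "d \<in> {-1,0,1}" "z = evec n i d" by blast
  have "evec n i d \<in> signs n" unfolding signs_def evec_def using d(1) by (auto simp: PiE_iff)
  moreover have "\<forall>j\<in>{..<n}-{i}. evec n i d j = 0" unfolding evec_def by simp
  ultimately show "z \<in> {z \<in> signs n. \<forall>j\<in>{..<n}-{i}. z j = 0}" using d(2) by simp
qed

lemma inj_evec: assumes "i < n" shows "inj_on (evec n i) A"
proof (rule inj_onI)
  fix a b assume "evec n i a = evec n i b"
  then have "evec n i a i = evec n i b i" by simp
  then show "a = b" using \<open>i < n\<close> unfolding evec_def by simp
qed




definition nwd :: "int \<Rightarrow> real" where "nwd d = (if d = 0 then -1 else 1/2)"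

lemma nw_deriv: "((\<lambda>e. noise_weight e d) has_field_derivative nwd d) (at e0)"
proof (cases "d = 0")
  case True
  then show ?thesis unfolding noise_weight_def nwd_def
    by (auto intro!: derivative_eq_intros)
next
  case False
  then show ?thesis unfolding noise_weight_def nwd_def
    by (auto intro!: derivative_eq_intros)
qed

lemma T_deriv:
  "((\<lambda>e. noise_op p n e f x) has_field_derivative
     (\<Sum>z\<in>signs n. (\<Sum>i\<in>{..<n}. nwd (z i) * (\<Prod>j\<in>{..<n}-{i}. noise_weight 0 (z j))) * f (addvec p n x z))) (at 0)"
  unfolding noise_op_def
  apply (rule DERIV_sum)
  apply (rule DERIV_cmult_right)
  apply (rule has_field_derivative_prod)
  apply (rule nw_deriv)
  done

definition Dval :: "nat \<Rightarrow> nat \<Rightarrow> ((nat \<Rightarrow> nat) \<Rightarrow> real) \<Rightarrow> (nat \<Rightarrow> nat) \<Rightarrow> real" where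
  "Dval p n f x = (\<Sum>i<n. (f (shift p x i 1) + f (shift p x i (-1))) / 2) - real n * f x"

lemma evec_at: "i < n \<Longrightarrow> evec n i d i = d" unfolding evec_def by simp

lemma deriv_val:
  assumes "x \<in> cube p n"
  shows "(\<Sum>z\<in>signs n. (\<Sum>i\<in>{..<n}. nwd (z i) * (\<Prod>j\<in>{..<n}-{i}. noise_weight 0 (z j))) * f (addvec p n x z))
         = Dval p n f x"
proof -
  have "(\<Sum>z\<in>signs n. (\<Sum>i\<in>{..<n}. nwd (z i) * (\<Prod>j\<in>{..<n}-{i}. noise_weight 0 (z j))) * f (addvec p n x z))
      = (\<Sum>z\<in>signs n. \<Sum>i\<in>{..<n}. nwd (z i) * (\<Prod>j\<in>{..<n}-{i}. noise_weight 0 (z j)) * f (addvec p n x z))"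
    by (simp add: sum_distrib_right)
  also have "\<dots> = (\<Sum>i\<in>{..<n}. \<Sum>z\<in>signs n. nwd (z i) * (\<Prod>j\<in>{..<n}-{i}. noise_weight 0 (z j)) * f (addvec p n x z))"
    by (rule sum.swap)
  also have "\<dots> = (\<Sum>i\<in>{..<n}. (f (shift p x i 1) + f (shift p x i (-1))) / 2 - f x)"
  proof (rule sum.cong[OF refl])
    fix i assume i: "i \<in> {..<n}"
    have "(\<Sum>z\<in>signs n. nwd (z i) * (\<Prod>j\<in>{..<n}-{i}. noise_weight 0 (z j)) * f (addvec p n x z))
        = (\<Sum>z\<in>signs n. if \<forall>j\<in>{..<n}-{i}. z j = 0 then nwd (z i) * f (addvec p n x z) else 0)"
      by (rule sum.cong[OF refl]) (simp add: prod_nw0)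
    also have "\<dots> = (\<Sum>z\<in>{z \<in> signs n. \<forall>j\<in>{..<n}-{i}. z j = 0}. nwd (z i) * f (addvec p n x z))"
      by (rule sum.inter_filter[symmetric]) (rule finite_signs)
    also have "\<dots> = (\<Sum>z\<in>evec n i ` {-1,0,1}. nwd (z i) * f (addvec p n x z))"
      using i by (simp add: signs_axis)
    also have "\<dots> = (\<Sum>d\<in>{-1,0,1}. nwd (evec n i d i) * f (addvec p n x (evec n i d)))"
      using sum.reindex[OF inj_evec[of i n "{-1,0,1}"], of "\<lambda>z. nwd (z i) * f (addvec p n x z)"] i
      by (simp only: comp_def lessThan_iff)
    also have "\<dots> = (\<Sum>d\<in>{-1,0,1}. nwd d * f (shift p x i d))"
      using i assms by (intro sum.cong refl) (simp add: addvec_evec evec_at)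
    also have "\<dots> = (f (shift p x i 1) + f (shift p x i (-1))) / 2 - f x"
      using i assms by (simp add: nwd_def shift_zero)
    finally show "(\<Sum>z\<in>signs n. nwd (z i) * (\<Prod>j\<in>{..<n}-{i}. noise_weight 0 (z j)) * f (addvec p n x z))
        = (f (shift p x i 1) + f (shift p x i (-1))) / 2 - f x" .
  qed
  also have "\<dots> = Dval p n f x"
    unfolding Dval_def by (simp add: sum_subtractf)
  finally show ?thesis .
qed

lemma T_zero:
  assumes "x \<in> cube p n"
  shows "noise_op p n 0 f x = f x"
proof -
  let ?z = "(\<lambda>j\<in>{..<n}. 0::int)"
  have "noise_op p n 0 f x = (\<Sum>z\<in>signs n. (if \<forall>j\<in>{..<n}. z j = 0 then f (addvec p n x z) else 0))"
    unfolding noise_op_def by (rule sum.cong[OF refl]) (simp add: prod_nw0)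
  also have "\<dots> = (\<Sum>z\<in>{z\<in>signs n. \<forall>j\<in>{..<n}. z j = 0}. f (addvec p n x z))"
    by (rule sum.inter_filter[symmetric]) (rule finite_signs)
  moreover have "{z\<in>signs n. \<forall>j\<in>{..<n}. z j = 0} = {?z}"
  proof (intro set_eqI iffI)
    fix z assume "z \<in> {z\<in>signs n. \<forall>j\<in>{..<n}. z j = 0}"
    then show "z \<in> {?z}" unfolding signs_def by (auto simp: PiE_iff extensional_def)
  next
    fix z assume "z \<in> {?z}"
    then show "z \<in> {z\<in>signs n. \<forall>j\<in>{..<n}. z j = 0}" unfolding signs_def by (auto simp: PiE_iff)
  qed
  moreover have "addvec p n x ?z = x"
  proof
    fix j
    show "addvec p n x ?z j = x j"
    proof (cases "j < n")
      case True
      then have "x j < p" using assms unfolding cube_def by auto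
      then show ?thesis using True unfolding addvec_def by simp
    next
      case False
      then have 1: "x j = undefined" using assms unfolding cube_def by (auto simp: PiE_iff extensional_def)
      have 2: "addvec p n x ?z j = undefined" using False unfolding addvec_def by simp
      show ?thesis using 1 2 by simp
    qed
  qed
  ultimately show ?thesis by simp
qed




lemma T_nonneg:
  assumes "0 \<le> e" "e \<le> 1" "\<forall>y. f y \<in> {0,1}"
  shows "0 \<le> noise_op p n e f x"
proof -
  have w: "0 \<le> noise_weight e d" for d using assms unfolding noise_weight_def by auto
  have f: "0 \<le> f y" for y using assms(3) by (metis empty_iff insert_iff order_refl zero_le_one)
  show ?thesis unfolding noise_op_def
    by (intro sum_nonneg mult_nonneg_nonneg prod_nonneg w f)
qed

lemma T_has_deriv:
  assumes "x \<in> cube p n"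
  shows "((\<lambda>e. noise_op p n e f x) has_field_derivative Dval p n f x) (at 0)"
  using T_deriv[of p n f x] deriv_val[OF assms, of f] by simp

lemma lim_point:
  assumes a: "\<alpha> > 1" and f01: "\<forall>y. f y \<in> {0,1}" and x: "x \<in> cube p n"
  shows "((\<lambda>e. (noise_op p n e f x powr \<alpha> - f x) / e) \<longlongrightarrow>
           (if f x = 1 then \<alpha> * Dval p n f x else 0)) (at_right 0)"
proof -
  let ?T = "\<lambda>e. noise_op p n e f x"
  let ?D = "Dval p n f x"
  have der: "(?T has_field_derivative ?D) (at 0)" using T_has_deriv[OF x] .
  have T0: "?T 0 = f x" using T_zero[OF x] .
  have "f x = 0 \<or> f x = 1" using f01 by auto
  then show ?thesis
  proof
    assume fx: "f x = 1"
    have "((\<lambda>e. ?T e powr \<alpha>) has_field_derivative (?T 0 powr \<alpha>) * (0 * ln (?T 0) + ?D * \<alpha> / ?T 0)) (at 0)"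
      by (rule DERIV_powr[OF der]) (auto simp: T0 fx)
    then have "((\<lambda>e. ?T e powr \<alpha>) has_field_derivative \<alpha> * ?D) (at 0)"
      by (simp add: T0 fx mult.commute)
    then have "((\<lambda>y. (?T y powr \<alpha> - ?T 0 powr \<alpha>) / (y - 0)) \<longlongrightarrow> \<alpha> * ?D) (at 0)"
      by (simp add: has_field_derivative_iff)
    then have "((\<lambda>y. (?T y powr \<alpha> - f x) / y) \<longlongrightarrow> \<alpha> * ?D) (at 0)"
      by (simp add: T0 fx)
    then have "((\<lambda>y. (?T y powr \<alpha> - f x) / y) \<longlongrightarrow> \<alpha> * ?D) (at_right 0)"
      by (rule tendsto_mono[OF at_le, rotated]) simp
    then show ?thesis using fx by simp
  next
    assume fx: "f x = 0"
    have "((\<lambda>y. (?T y - ?T 0) / (y - 0)) \<longlongrightarrow> ?D) (at 0)"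
      using der by (simp add: has_field_derivative_iff)
    then have "((\<lambda>y. ?T y / y) \<longlongrightarrow> ?D) (at 0)" by (simp add: T0 fx)
    then have q: "((\<lambda>y. ?T y / y) \<longlongrightarrow> ?D) (at_right 0)"
      by (rule tendsto_mono[OF at_le, rotated]) simp
    have ev01: "eventually (\<lambda>e. 0 < e \<and> e < 1) (at_right (0::real))"
      unfolding eventually_at_right_field by (intro exI[of _ 1]) auto
    have qnn: "eventually (\<lambda>e. 0 \<le> ?T e / e) (at_right 0)"
      using ev01 by eventually_elim (auto intro!: divide_nonneg_nonneg T_nonneg f01)
    have l1: "((\<lambda>e. (?T e / e) powr \<alpha>) \<longlongrightarrow> ?D powr \<alpha>) (at_right 0)"
      using a qnn by (intro tendsto_powr' q tendsto_const) auto
    have id0: "((\<lambda>e. e) \<longlongrightarrow> (0::real)) (at_right 0)"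
      by (rule tendsto_mono[OF at_le, rotated]) (auto intro: tendsto_ident_at)
    have l2: "((\<lambda>e. e powr (\<alpha> - 1)) \<longlongrightarrow> 0) (at_right 0)"
      using a ev01 by (intro tendsto_zero_powrI[OF id0 tendsto_const]) (auto elim: eventually_mono)
    have l3: "((\<lambda>e. (?T e / e) powr \<alpha> * e powr (\<alpha> - 1)) \<longlongrightarrow> ?D powr \<alpha> * 0) (at_right 0)"
      by (rule tendsto_mult[OF l1 l2])
    have eq: "eventually (\<lambda>e. (?T e / e) powr \<alpha> * e powr (\<alpha> - 1) = (?T e powr \<alpha> - f x) / e) (at_right 0)"
      using ev01
    proof eventually_elim
      case (elim e)
      have Tn: "0 \<le> ?T e" using elim by (intro T_nonneg f01) auto
      have "?T e powr \<alpha> = (?T e / e * e) powr \<alpha>" using elim by simp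
      also have "\<dots> = (?T e / e) powr \<alpha> * e powr \<alpha>"
        using elim Tn powr_mult[of "?T e / e" e \<alpha>] by simp
      finally have "(?T e powr \<alpha> - f x) / e = (?T e / e) powr \<alpha> * (e powr \<alpha> / e)"
        using fx by simp
      also have "e powr \<alpha> / e = e powr (\<alpha> - 1)"
        using elim by (simp add: powr_diff)
      finally show ?case by simp
    qed
    have "((\<lambda>e. (?T e powr \<alpha> - f x) / e) \<longlongrightarrow> 0) (at_right 0)"
      using l3 tendsto_cong[OF eq] by simp
    then show ?thesis using fx by simp
  qed
qed




definition Ssum :: "nat \<Rightarrow> nat \<Rightarrow> ((nat \<Rightarrow> nat) \<Rightarrow> real) \<Rightarrow> nat \<Rightarrow> int \<Rightarrow> real" where
  "Ssum p n f i d = (\<Sum>x\<in>cube p n. f x * (1 - f (shift p x i d)))"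

lemma card_sum:
  assumes "finite A"
  shows "real (card {x\<in>A. P x}) = (\<Sum>x\<in>A. if P x then 1 else 0)"
proof -
  have "real (card {x\<in>A. P x}) = (\<Sum>x\<in>{x\<in>A. P x}. 1)" by simp
  also have "\<dots> = (\<Sum>x\<in>A. if P x then 1 else 0)" by (rule sum.inter_filter[OF assms])
  finally show ?thesis .
qed

lemma reflect:
  assumes p: "p > 0" and i: "i < n"
  shows "(\<Sum>x\<in>cube p n. f (shift p x i d) * (1 - f x)) = Ssum p n f i (-d)"
  unfolding Ssum_def
proof (rule sum.reindex_bij_witness[where i = "\<lambda>x. shift p x i (-d)" and j = "\<lambda>x. shift p x i d"])
  fix a assume a: "a \<in> cube p n"
  show "shift p (shift p a i d) i (-d) = a" using shift_inv[OF p a i] .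
  show "shift p a i d \<in> cube p n" using shift_in[OF p a i] .
  show "f (shift p a i d) * (1 - f (shift p (shift p a i d) i (- d))) = f (shift p a i d) * (1 - f a)"
    using shift_inv[OF p a i] by simp
next
  fix b assume b: "b \<in> cube p n"
  show "shift p (shift p b i (-d)) i d = b" using shift_inv[OF p b i, of "-d"] by simp
  show "shift p b i (-d) \<in> cube p n" using shift_in[OF p b i] .
qed

lemma card_inf:
  assumes p: "p > 0" and i: "i < n" and f01: "\<forall>y. f y \<in> {0,1}"
  shows "real (card {x\<in>cube p n. f x \<noteq> f (shift p x i d)}) = Ssum p n f i d + Ssum p n f i (-d)"
proof -
  have "real (card {x\<in>cube p n. f x \<noteq> f (shift p x i d)})
      = (\<Sum>x\<in>cube p n. if f x \<noteq> f (shift p x i d) then 1 else 0)"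
    by (rule card_sum[OF finite_cube])
  also have "\<dots> = (\<Sum>x\<in>cube p n. f x * (1 - f (shift p x i d)) + f (shift p x i d) * (1 - f x))"
  proof (rule sum.cong[OF refl])
    fix x
    have "f x = 0 \<or> f x = 1" "f (shift p x i d) = 0 \<or> f (shift p x i d) = 1" using f01 by auto
    then show "(if f x \<noteq> f (shift p x i d) then 1 else 0) = f x * (1 - f (shift p x i d)) + f (shift p x i d) * (1 - f x)"
      by auto
  qed
  also have "\<dots> = Ssum p n f i d + (\<Sum>x\<in>cube p n. f (shift p x i d) * (1 - f x))"
    unfolding Ssum_def by (rule sum.distrib)
  also have "\<dots> = Ssum p n f i d + Ssum p n f i (-d)" using reflect[OF p i] by simp
  finally show ?thesis .
qed

lemma infl:
  assumes p: "p > 0" and i: "i < n" and f01: "\<forall>y. f y \<in> {0,1}"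
  shows "influence p n f i = (Ssum p n f i (-1) + Ssum p n f i 1) / real p ^ n"
proof -
  have "real p ^ n > 0" using p by simp
  then show ?thesis
    unfolding influence_def using card_inf[OF p i f01, of 1] card_inf[OF p i f01, of "-1"]
    by (simp add: field_simps)
qed

lemma tinfl:
  assumes p: "p > 0" and f01: "\<forall>y. f y \<in> {0,1}"
  shows "total_influence p n f = (\<Sum>i<n. Ssum p n f i (-1) + Ssum p n f i 1) / real p ^ n"
  unfolding total_influence_def using infl[OF p _ f01]
  by (simp add: sum_divide_distrib)

lemma aux_lin:
  fixes A B \<alpha> :: real
  assumes "A + B = real n * 2"
  shows "\<alpha> * A / 2 + \<alpha> * B / 2 = \<alpha> * real n"
proof -
  have "\<alpha> * A / 2 + \<alpha> * B / 2 = \<alpha> * (A + B) / 2" by (simp add: distrib_left add_divide_distrib)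
  then show ?thesis using assms by simp
qed

lemma point_id:
  assumes f01: "\<forall>y. f y \<in> {0,1}"
  shows "(if f x = 1 then \<alpha> * Dval p n f x else 0)
       = -(\<alpha>/2) * (\<Sum>i<n. f x * (1 - f (shift p x i (-1))) + f x * (1 - f (shift p x i 1)))"
proof -
  have "f x = 0 \<or> f x = 1" using f01 by auto
  then show ?thesis
  proof
    assume "f x = 0" then show ?thesis by simp
  next
    assume fx: "f x = 1"
    have "(\<Sum>i<n. (1 - f (shift p x i (-1))) + (1 - f (shift p x i 1)))
        = 2 * real n - (\<Sum>i<n. f (shift p x i 1) + f (shift p x i (-1)))"
      by (simp add: sum.distrib sum_subtractf sum_negf)
    then show ?thesis using fx unfolding Dval_def
      by (simp add: sum_divide_distrib[symmetric] algebra_simps) (erule aux_lin)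
  qed
qed

lemma key_id:
  assumes f01: "\<forall>y. f y \<in> {0,1}"
  shows "(\<Sum>x\<in>cube p n. if f x = 1 then \<alpha> * Dval p n f x else 0)
       = -(\<alpha>/2) * (\<Sum>i<n. Ssum p n f i (-1) + Ssum p n f i 1)"
proof -
  have "(\<Sum>x\<in>cube p n. if f x = 1 then \<alpha> * Dval p n f x else 0)
      = (\<Sum>x\<in>cube p n. -(\<alpha>/2) * (\<Sum>i<n. f x * (1 - f (shift p x i (-1))) + f x * (1 - f (shift p x i 1))))"
    using point_id[OF f01] by simp
  also have "\<dots> = -(\<alpha>/2) * (\<Sum>x\<in>cube p n. \<Sum>i<n. f x * (1 - f (shift p x i (-1))) + f x * (1 - f (shift p x i 1)))"
    by (simp add: sum_distrib_left)
  also have "(\<Sum>x\<in>cube p n. \<Sum>i<n. f x * (1 - f (shift p x i (-1))) + f x * (1 - f (shift p x i 1)))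
      = (\<Sum>i<n. \<Sum>x\<in>cube p n. f x * (1 - f (shift p x i (-1))) + f x * (1 - f (shift p x i 1)))"
    by (rule sum.swap)
  also have "\<dots> = (\<Sum>i<n. Ssum p n f i (-1) + Ssum p n f i 1)"
    unfolding Ssum_def by (simp add: sum.distrib)
  finally show ?thesis .
qed

lemma bm01: "f \<in> boolean_mean p n m \<Longrightarrow> \<forall>y. f y \<in> {0,1}"
  unfolding boolean_mean_def by (metis (mono_tags, lifting) insertI1 mem_Collect_eq)

lemma lim_Phi:
  assumes p: "p > 0" and a: "\<alpha> > 1" and f: "f \<in> boolean_mean p n m"
  shows "((\<lambda>e. (expect p n (\<lambda>x. noise_op p n e f x powr \<alpha>) - m) / e) \<longlongrightarrow>
           -(\<alpha>/2) * total_influence p n f) (at_right 0)"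
proof -
  have f01: "\<forall>y. f y \<in> {0,1}" using bm01[OF f] .
  have m: "m = (\<Sum>x\<in>cube p n. f x) / real p ^ n" using f unfolding boolean_mean_def expect_def by simp
  have eq: "(\<lambda>e. (expect p n (\<lambda>x. noise_op p n e f x powr \<alpha>) - m) / e)
      = (\<lambda>e. (\<Sum>x\<in>cube p n. (noise_op p n e f x powr \<alpha> - f x) / e) / real p ^ n)"
  proof
    fix e
    have "(\<Sum>x\<in>cube p n. (noise_op p n e f x powr \<alpha> - f x) / e)
        = ((\<Sum>x\<in>cube p n. noise_op p n e f x powr \<alpha>) - (\<Sum>x\<in>cube p n. f x)) / e"
      by (simp add: sum_divide_distrib[symmetric] sum_subtractf)
    then show "(expect p n (\<lambda>x. noise_op p n e f x powr \<alpha>) - m) / e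
        = (\<Sum>x\<in>cube p n. (noise_op p n e f x powr \<alpha> - f x) / e) / real p ^ n"
      unfolding m expect_def by (simp add: diff_divide_distrib mult.commute)
  qed
  have lim: "((\<lambda>e. (\<Sum>x\<in>cube p n. (noise_op p n e f x powr \<alpha> - f x) / e) / real p ^ n) \<longlongrightarrow>
        (\<Sum>x\<in>cube p n. if f x = 1 then \<alpha> * Dval p n f x else 0) / real p ^ n) (at_right 0)"
    using p by (intro tendsto_divide tendsto_sum tendsto_const lim_point[OF a f01]) auto
  have val: "(\<Sum>x\<in>cube p n. if f x = 1 then \<alpha> * Dval p n f x else 0) / real p ^ n
      = -(\<alpha>/2) * total_influence p n f"
    unfolding key_id[OF f01] tinfl[OF p f01] by simp
  show ?thesis using lim unfolding eq val .
qed




lemma finite_bm: "finite (boolean_mean p n m)"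
proof -
  have "boolean_mean p n m \<subseteq> (\<lambda>S y. if y \<in> S then 1 else 0) ` Pow (cube p n)"
  proof
    fix f assume f: "f \<in> boolean_mean p n m"
    have "f = (\<lambda>y. if y \<in> {x\<in>cube p n. f x = 1} then 1 else 0)"
    proof
      fix y
      show "f y = (if y \<in> {x\<in>cube p n. f x = 1} then 1 else 0)"
        using f unfolding boolean_mean_def by (cases "y \<in> cube p n") auto
    qed
    then show "f \<in> (\<lambda>S y. if y \<in> S then 1 else 0) ` Pow (cube p n)" by blast
  qed
  moreover have "finite ((\<lambda>S y. if y \<in> S then (1::real) else 0) ` Pow (cube p n))"
    using finite_cube by simp
  ultimately show ?thesis by (rule finite_subset)
qed

theorem theorem6:
  fixes p n j :: nat and \<alpha> m :: real
  assumes "p \<ge> 2" and "n \<ge> 1" and "\<alpha> > 1"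
    and "j \<le> p ^ n" and "m = real j / real p ^ n"
  shows "\<exists>\<epsilon>0>0. \<forall>\<epsilon>. 0 < \<epsilon> \<and> \<epsilon> < \<epsilon>0 \<longrightarrow>
           (\<forall>f\<in>boolean_mean p n m.
              (\<forall>g\<in>boolean_mean p n m.
                 expect p n (\<lambda>x. noise_op p n \<epsilon> g x powr \<alpha>)
                   \<le> expect p n (\<lambda>x. noise_op p n \<epsilon> f x powr \<alpha>))
              \<longrightarrow> (\<forall>g\<in>boolean_mean p n m. total_influence p n f \<le> total_influence p n g))"
proof -
  have p: "p > 0" using assms(1) by simp
  let ?B = "boolean_mean p n m"
  let ?P = "\<lambda>e f. expect p n (\<lambda>x. noise_op p n e f x powr \<alpha>)"
  have ev: "eventually (\<lambda>e. \<forall>fg\<in>?B \<times> ?B. total_influence p n (snd fg) < total_influence p n (fst fg)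
              \<longrightarrow> ?P e (fst fg) < ?P e (snd fg)) (at_right 0)"
  proof (rule eventually_ball_finite)
    show "finite (?B \<times> ?B)" using finite_bm by simp
    show "\<forall>fg\<in>?B \<times> ?B. eventually (\<lambda>e. total_influence p n (snd fg) < total_influence p n (fst fg)
              \<longrightarrow> ?P e (fst fg) < ?P e (snd fg)) (at_right 0)"
    proof
      fix fg assume fg: "fg \<in> ?B \<times> ?B"
      obtain f g where fgd: "fg = (f, g)" by (cases fg)
      have f: "f \<in> ?B" and g: "g \<in> ?B" using fg fgd by auto
      show "eventually (\<lambda>e. total_influence p n (snd fg) < total_influence p n (fst fg)
              \<longrightarrow> ?P e (fst fg) < ?P e (snd fg)) (at_right 0)"
      proof (cases "total_influence p n g < total_influence p n f")
        case False then show ?thesis using fgd by simp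
      next
        case True
        have lim: "((\<lambda>e. (?P e g - m) / e - (?P e f - m) / e) \<longlongrightarrow>
            -(\<alpha>/2) * total_influence p n g - -(\<alpha>/2) * total_influence p n f) (at_right 0)"
          by (intro tendsto_diff lim_Phi[OF p assms(3) g] lim_Phi[OF p assms(3) f])
        have pos: "-(\<alpha>/2) * total_influence p n g - -(\<alpha>/2) * total_influence p n f > 0"
          using True assms(3) by (simp add: algebra_simps)
        have e1: "eventually (\<lambda>e. (?P e g - m) / e - (?P e f - m) / e > 0) (at_right 0)"
          using order_tendstoD(1)[OF lim pos] .
        have e2: "eventually (\<lambda>e. (0::real) < e) (at_right 0)"
          by (simp add: eventually_at_filter)
        show ?thesis using e1 e2
        proof eventually_elim
          case (elim e)
          then have "(?P e g - m) / e > (?P e f - m) / e" by simp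
          then have "?P e g - m > ?P e f - m" using elim(2) by (simp add: divide_strict_right_mono_neg divide_less_cancel)
          then show ?case using fgd by simp
        qed
      qed
    qed
  qed
  then obtain b where b: "b > 0" "\<forall>e>0. e < b \<longrightarrow> (\<forall>fg\<in>?B \<times> ?B. total_influence p n (snd fg) < total_influence p n (fst fg)
              \<longrightarrow> ?P e (fst fg) < ?P e (snd fg))"
    unfolding eventually_at_right_field by auto
  show ?thesis
  proof (intro exI[of _ b] conjI allI impI ballI)
    show "b > 0" using b(1) .
  next
    fix e f g
    assume e: "0 < e \<and> e < b" and f: "f \<in> ?B" and max: "\<forall>g\<in>?B. ?P e g \<le> ?P e f" and g: "g \<in> ?B"
    show "total_influence p n f \<le> total_influence p n g"
    proof (rule ccontr)
      assume "\<not> total_influence p n f \<le> total_influence p n g"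
      then have "total_influence p n g < total_influence p n f" by simp
      then have "?P e f < ?P e g" using b(2) e f g by force
      moreover have "?P e g \<le> ?P e f" using max g by blast
      ultimately show False by simp
    qed
  qed
qed


end
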